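(* Let $n_0$ be a positive integer satisfying: 1. every subgroup of index a power of two of any insolvable group of order $n_0$ is insolvable; 2. there is no non-abelian simple group of order $2^r\cdot n_0$ for any integer $r\ge1$; 3. if $n_0$ is even, then $n_0/2$ is a solvable number; 4. for every odd prime $p$ dividing $n_0$ and every integer $r\ge0$, the number $(2^r\cdot n_0)/p$ is solvable. Then for every integer $r\ge0$: (i) every subgroup of index a power of two of any insolvable group of order $2^r\cdot n_0$ is insolvable; (ii) every insolvable group of order $2^r\cdot n_0$ has a non-abelian composition factor of order $n_0$.
   Context: A positive integer $n$ is called solvable if every group of order $n$ is solvable. *)

theory Defs
  imports "HOL-Algebra.Algebra"
begin

definition composition_series :: "('a, 'b) monoid_scheme \<Rightarrow> 'a set list \<Rightarrow> bool" where
  "composition_series G Hs \<longleftrightarrow>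
     Hs \<noteq> [] \<and> hd Hs = {\<one>\<^bsub>G\<^esub>} \<and> last Hs = carrier G \<and>
     (\<forall>H\<in>set Hs. subgroup H G) \<and>
     (\<forall>i. Suc i < length Hs \<longrightarrow>
        Hs ! i \<lhd> G\<lparr>carrier := Hs ! Suc i\<rparr> \<and>
        simple_group (G\<lparr>carrier := Hs ! Suc i\<rparr> Mod (Hs ! i)))"

definition comp_factor :: "('a, 'b) monoid_scheme \<Rightarrow> 'a set list \<Rightarrow> nat \<Rightarrow> 'a set monoid" where
  "comp_factor G Hs i = G\<lparr>carrier := Hs ! Suc i\<rparr> Mod (Hs ! i)"

text \<open>n is solvable if every group of order n is solvable. Every group of order n
  is isomorphic to one with carrier in nat, so we quantify over groups on nat.\<close>
definition solvable_number :: "nat \<Rightarrow> bool" where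
  "solvable_number n \<longleftrightarrow> (\<forall>G :: nat monoid. group G \<and> order G = n \<longrightarrow> solvable G)"

end

theory Submission
  imports Defs "HOL-Algebra.Elementary_Groups"
begin

lemma carrier_self_upd [simp]: "G\<lparr>carrier := carrier G\<rparr> = G"
  by simp

lemma solvable_seq_sub1:
  assumes "group G" "subgroup H G" "solvable_seq (G\<lparr>carrier := H\<rparr>) Y"
  shows "solvable_seq G Y"
  using assms(3)
proof (induction)
  case unity
  then show ?case using solvable_seq.unity[of G] by simp
next
  case (extension K H')
  have "subgroup H' (G\<lparr>carrier := H\<rparr>)" using extension.hyps by blast
  then have "subgroup H' G" using group.incl_subgroup[OF assms(1,2)] by blast
  then show ?case using solvable_seq.extension[of G K H'] extension by simp
qed

lemma solvable_seq_sub2: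
  assumes "group G" "subgroup H G" "solvable_seq G Y"
  shows "Y \<subseteq> H \<Longrightarrow> solvable_seq (G\<lparr>carrier := H\<rparr>) Y"
  using assms(3)
proof (induction)
  case unity
  then show ?case using solvable_seq.unity[of "G\<lparr>carrier := H\<rparr>"] by simp
next
  case (extension K H')
  have "K \<lhd> G\<lparr>carrier := H'\<rparr>" using extension.hyps by blast
  then have KH: "K \<subseteq> H'" using normal_imp_subgroup subgroup.subset by fastforce
  have "subgroup H' G" "H' \<subseteq> H" using extension by blast+
  then have "subgroup H' (G\<lparr>carrier := H\<rparr>)"
    using group.subgroup_incl[OF assms(1) _ assms(2)] by blast
  then show ?case using solvable_seq.extension[of "G\<lparr>carrier := H\<rparr>" K H'] extension KH by simp
qed

lemma solvable_sub_iff: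
  assumes "group G" "subgroup H G"
  shows "solvable (G\<lparr>carrier := H\<rparr>) \<longleftrightarrow> solvable_seq G H"
  unfolding solvable_def using solvable_seq_sub1[OF assms] solvable_seq_sub2[OF assms] by auto

lemma (in group) solvable_seq_mono:
  assumes "subgroup K G" "K \<subseteq> H" "solvable_seq G H"
  shows "solvable_seq G K"
proof -
  obtain n where n: "(derived G ^^ n) H = { \<one> }"
    using solvable_imp_trivial_derived_seq[OF assms(3)] by blast
  show ?thesis
  proof (rule trivial_derived_seq_imp_solvable[OF assms(1), of n])
    show "(derived G ^^ n) K = { \<one> }"
      using subgroup.one_closed[OF exp_of_derived_is_subgroup[OF assms(1)], of n]
            mono_exp_of_derived[OF assms(2), of n] n
      by auto
  qed
qed

lemma solvable_sub_mono:
  assumes "group G" "subgroup H G" "subgroup K G" "K \<subseteq> H" "solvable (G\<lparr>carrier := H\<rparr>)"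
  shows "solvable (G\<lparr>carrier := K\<rparr>)"
  using group.solvable_seq_mono[OF assms(1,3,4)] solvable_sub_iff assms by blast

lemma solvable_img:
  assumes "group_hom G Q f" "subgroup H G" "solvable (G\<lparr>carrier := H\<rparr>)"
  shows "solvable (Q\<lparr>carrier := f ` H\<rparr>)"
proof -
  interpret group_hom G Q f by fact
  have "solvable_seq G H" using solvable_sub_iff assms(2,3) G.group_axioms by blast
  then have "solvable_seq Q (f ` H)" by (rule solvable_imp_solvable_img)
  then show ?thesis using solvable_sub_iff[OF H.group_axioms subgroup_img_is_subgroup[OF assms(2)]] by blast
qed

lemma solvable_ext:
  assumes "group G" "M \<lhd> G" "solvable (G\<lparr>carrier := M\<rparr>)" "comm_group (G Mod M)"
  shows "solvable G"
proof -
  have sM: "subgroup M G" using assms(2) normal_imp_subgroup by blast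
  have "solvable_seq G M" using solvable_sub_iff[OF assms(1) sM] assms(3) by blast
  then have "solvable_seq G (carrier G)"
    using solvable_seq.extension[of G M "carrier G"] assms group.subgroup_self by fastforce
  then show ?thesis by (simp add: solvable_def)
qed

lemma (in simple_group) simple_noncomm_insolvable:
  assumes "\<not> comm_group G"
  shows "\<not> solvable G"
proof
  assume sol: "solvable G"
  let ?D = "derived G (carrier G)"
  have "?D \<lhd> G" by (rule derived_self_is_normal)
  then have "?D = carrier G \<or> ?D = {\<one>}" by (rule no_real_normal_subgroup)
  then show False
  proof
    assume D: "?D = carrier G"
    have "(derived G ^^ n) (carrier G) = carrier G" for n
      by (induction n) (simp_all add: D)
    then show False using sol simple_not_triv solvable_iff_trivial_derived_seq by auto
  next
    assume D: "?D = {\<one>}"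
    have "comm_group G"
    proof (rule group_comm_groupI)
      fix x y assume xy: "x \<in> carrier G" "y \<in> carrier G"
      have "x \<otimes> y \<otimes> inv x \<otimes> inv y \<in> derived_set G (carrier G)" using xy by blast
      then have "x \<otimes> y \<otimes> inv x \<otimes> inv y \<in> ?D" unfolding derived_def by (rule generate.incl)
      then have e: "x \<otimes> y \<otimes> inv x \<otimes> inv y = \<one>" using D by blast
      have "x \<otimes> y = (x \<otimes> y \<otimes> inv x \<otimes> inv y) \<otimes> y \<otimes> x"
        using xy by (simp add: m_assoc)
      also have "\<dots> = y \<otimes> x" using e xy by simp
      finally show "x \<otimes> y = y \<otimes> x" .
    qed
    then show False using assms(1) by blast
  qed
qed

lemma transfer_nat:
  assumes "group G" "finite (carrier G)"
  shows "\<exists>(K::nat monoid) \<phi>. group K \<and> \<phi> \<in> iso G K"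
proof -
  interpret group G by fact
  obtain f and n :: nat where f: "f ` carrier G = {i. i < n}" "inj_on f (carrier G)"
    using finite_imp_inj_to_nat_seg[OF assms(2)] by blast
  define g where "g = inv_into (carrier G) f"
  have gf: "g (f x) = x" if "x \<in> carrier G" for x
    using f(2) that unfolding g_def by simp
  define H0 where "H0 = \<lparr>carrier = (UNIV :: nat set), monoid.mult = (\<lambda>a b. f (g a \<otimes>\<^bsub>G\<^esub> g b)), one = f \<one>\<^bsub>G\<^esub>\<rparr>"
  have hom0: "f \<in> hom G H0"
    unfolding hom_def H0_def using gf by auto
  define K where "K = H0\<lparr>carrier := f ` carrier G, one := f \<one>\<^bsub>G\<^esub>\<rparr>"
  have "group K" unfolding K_def by (rule hom_imp_img_group[OF hom0])
  moreover have "f \<in> iso G K"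
    unfolding iso_def hom_def bij_betw_def K_def H0_def using gf f(2) by auto
  ultimately show ?thesis by blast
qed

lemma solvable_by_number:
  assumes "solvable_number n" "group G" "order G = n" "n > 0"
  shows "solvable G"
proof -
  have fin: "finite (carrier G)" using assms(3,4) unfolding order_def using card_ge_0_finite by blast
  obtain K :: "nat monoid" and \<phi> where K: "group K" "\<phi> \<in> iso G K"
    using transfer_nat[OF assms(2) fin] by blast
  have "order K = n" using iso_same_order[OF K(2)] assms(3) by simp
  then have "solvable K" using assms(1) K(1) unfolding solvable_number_def by blast
  moreover have "group_hom G K \<phi>" using K assms(2) unfolding group_hom_def group_hom_axioms_def iso_def by blast
  ultimately show ?thesis using group_hom.inj_hom_imp_solvable K(2) unfolding iso_def bij_betw_def by blast
qed

lemma divisor_solvable: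
  assumes "solvable_number N" "N > 0" "group G" "order G dvd N"
  shows "solvable G"
proof -
  let ?d = "order G"
  have dpos: "?d > 0" using assms(2,4) by (metis dvd_pos_nat)
  define c where "c = N div ?d"
  have cpos: "c > 0" using assms(2,4) dpos unfolding c_def by (metis div_greater_zero_iff dvd_imp_le)
  let ?C = "integer_mod_group c"
  let ?P = "G \<times>\<times> ?C"
  have gP: "group ?P" using DirProd_group[OF assms(3) group_integer_mod_group] by simp
  have cC: "carrier ?C = {0..<int c}" using cpos by (simp add: carrier_integer_mod_group)
  have "order ?P = ?d * c" unfolding order_def using cC by (simp add: card_cartesian_product)
  also have "\<dots> = N" using assms(4) unfolding c_def by simp
  finally have "solvable ?P" using solvable_by_number[OF assms(1) gP _ assms(2)] by blast
  moreover have "(id \<circ> fst) \<in> hom ?P G"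
    using hom_of_fst[of ?C id G G] id_iso[of G] unfolding iso_def by simp
  moreover have "(id \<circ> fst) ` carrier ?P = carrier G"
    using cC cpos by force
  ultimately show ?thesis
    using group_hom.surj_hom_imp_solvable[of ?P G "id \<circ> fst"] gP assms(3)
    unfolding group_hom_def group_hom_axioms_def by blast
qed

lemma pow2_dvd: "(e::nat) dvd 2 ^ r \<Longrightarrow> \<exists>s. e = 2 ^ s"
  using divides_primepow_nat[of 2 e r] by auto

lemma nt_divisor:
  fixes n0 d r :: nat
  assumes n0: "n0 > 0" and dd: "d dvd 2 ^ r * n0" and nf: "\<forall>s. d \<noteq> 2 ^ s * n0"
  shows "(\<exists>p. Factorial_Ring.prime p \<and> odd p \<and> p dvd n0 \<and> d dvd (2 ^ r * n0) div p) \<or> (even n0 \<and> d dvd n0 div 2)"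
proof -
  have nd: "\<not> n0 dvd d"
  proof
    assume "n0 dvd d"
    then obtain e where e: "d = n0 * e" by blast
    then have "n0 * e dvd n0 * 2 ^ r" using dd by (simp add: mult.commute)
    then have "e dvd 2 ^ r" using n0 by simp
    then obtain s where "e = 2 ^ s" using pow2_dvd by blast
    then show False using nf e by (simp add: mult.commute)
  qed
  have g0: "gcd d n0 \<noteq> 0" using n0 by simp
  obtain d' q where dq: "d = d' * gcd d n0" "n0 = q * gcd d n0" "coprime d' q"
    using gcd_coprime_exists[OF g0] by blast
  define g where "g = gcd d n0"
  have dq': "d = g * d'" "n0 = g * q" using dq unfolding g_def by (simp_all add: mult.commute)
  have gpos: "g > 0" using g0 unfolding g_def by simp
  have q1: "q \<noteq> 1" using nd dq' by auto
  have "g * d' dvd g * (2 ^ r * q)" using dd dq' by (simp add: ac_simps)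
  then have "d' dvd 2 ^ r * q" using gpos by simp
  then have d'2: "d' dvd 2 ^ r" using dq(3) by (simp add: coprime_dvd_mult_left_iff)
  show ?thesis
  proof (cases "\<exists>p. Factorial_Ring.prime p \<and> odd p \<and> p dvd q")
    case True
    then obtain p where p: "Factorial_Ring.prime p" "odd p" "p dvd q" by blast
    then obtain q' where q': "q = p * q'" by blast
    have pn: "p dvd n0" using p(3) dq' by simp
    have "(2 ^ r * n0) div p = 2 ^ r * g * q'"
      using q' dq' p(1) prime_gt_0_nat by simp
    moreover have "d dvd 2 ^ r * g * q'" using d'2 dq' by (simp add: ac_simps mult_dvd_mono)
    ultimately show ?thesis using p pn by auto
  next
    case False
    obtain p where p: "Factorial_Ring.prime p" "p dvd q" using prime_factor_nat[OF q1] by blast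
    have "even p" using False p by blast
    then have "p = 2" using p(1) by (metis primes_dvd_imp_eq two_is_prime_nat)
    then have eq: "even q" using p by simp
    have "odd d'"
    proof
      assume "even d'"
      then show False using coprime_common_divisor[OF dq(3), of 2] eq by simp
    qed
    then have "d' = 1" using d'2 divides_primepow_nat[of 2 d' r] by auto
    then have "d = g" using dq' by simp
    moreover have "n0 div 2 = g * (q div 2)" using eq dq' by auto
    ultimately show ?thesis using eq dq' by auto
  qed
qed

context
  fixes n0 :: nat
  assumes n0_pos: "n0 > 0"
    and h3: "even n0 \<longrightarrow> solvable_number (n0 div 2)"
    and h4: "\<forall>p r'. Factorial_Ring.prime (p::nat) \<and> odd p \<and> p dvd n0 \<longrightarrow> solvable_number ((2 ^ r' * n0) div p)"
begin

lemma insolv_order: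
  assumes "group Q" "order Q dvd 2 ^ r * n0" "\<not> solvable Q"
  shows "\<exists>s. order Q = 2 ^ s * n0"
proof (rule ccontr)
  assume "\<not> (\<exists>s. order Q = 2 ^ s * n0)"
  then have "(\<exists>p. Factorial_Ring.prime p \<and> odd p \<and> p dvd n0 \<and> order Q dvd (2 ^ r * n0) div p) \<or> (even n0 \<and> order Q dvd n0 div 2)"
    using nt_divisor[OF n0_pos assms(2)] by blast
  then show False
  proof
    assume "\<exists>p. Factorial_Ring.prime p \<and> odd p \<and> p dvd n0 \<and> order Q dvd (2 ^ r * n0) div p"
    then obtain p where p: "Factorial_Ring.prime p" "odd p" "p dvd n0" "order Q dvd (2 ^ r * n0) div p" by blast
    have "solvable_number ((2 ^ r * n0) div p)" using h4 p by blast
    moreover have "(2 ^ r * n0) div p > 0"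
      using p(1,3) n0_pos by (metis div_greater_zero_iff dvd_imp_le dvd_mult le_trans
          nat_0_less_mult_iff prime_gt_0_nat zero_less_numeral zero_less_power dvd_mult_left)
    ultimately show False using divisor_solvable assms p(4) by blast
  next
    assume e: "even n0 \<and> order Q dvd n0 div 2"
    have "solvable_number (n0 div 2)" using h3 e by blast
    moreover have "n0 div 2 > 0" using e n0_pos by auto
    ultimately show False using divisor_solvable assms e by blast
  qed
qed

end

lemma h2_any:
  assumes h2: "\<forall>r'::nat. r' \<ge> 1 \<longrightarrow> \<not> (\<exists>S :: nat monoid. simple_group S \<and> \<not> comm_group S \<and>
               order S = 2 ^ r' * n0)"
    and "simple_group Q" "\<not> comm_group Q" "order Q = 2 ^ s * n0" "s \<ge> 1"
  shows False
proof -
  interpret Q: simple_group Q by fact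
  have fin: "finite (carrier Q)" using Q.order_gt_one unfolding order_def by (metis card.infinite not_less_zero)
  obtain K :: "nat monoid" and \<phi> where K: "group K" "\<phi> \<in> iso Q K"
    using transfer_nat[OF Q.is_group fin] by blast
  have sK: "simple_group K" using Q.iso_simple[OF K] .
  have "\<not> comm_group K"
  proof
    assume cK: "comm_group K"
    have "K \<cong> Q" using Q.iso_sym is_isoI[OF K(2)] by blast
    then have "comm_group Q" using comm_group.iso_imp_comm_group[OF cK] Q.is_monoid by blast
    then show False using assms(3) by blast
  qed
  moreover have "order K = 2 ^ s * n0" using iso_same_order[OF K(2)] assms(4) by simp
  ultimately show False using h2 sK assms(5) by blast
qed

lemma h1_any:
  assumes h1: "\<forall>K :: nat monoid. group K \<and> order K = n0 \<and> \<not> solvable K \<longrightarrow>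
               (\<forall>H k. subgroup H K \<and> order K = 2 ^ k * card H \<longrightarrow>
                  \<not> solvable (K\<lparr>carrier := H\<rparr>))"
    and "n0 > 0" "group Q" "order Q = n0" "\<not> solvable Q" "subgroup H Q" "order Q = 2 ^ k * card H"
  shows "\<not> solvable (Q\<lparr>carrier := H\<rparr>)"
proof
  assume sol: "solvable (Q\<lparr>carrier := H\<rparr>)"
  have fin: "finite (carrier Q)" using assms(2,4) unfolding order_def using card_ge_0_finite by blast
  obtain K :: "nat monoid" and \<phi> where K: "group K" "\<phi> \<in> iso Q K"
    using transfer_nat[OF assms(3) fin] by blast
  have gh: "group_hom Q K \<phi>" using K assms(3) unfolding group_hom_def group_hom_axioms_def iso_def by blast
  have inj: "inj_on \<phi> (carrier Q)" using K(2) unfolding iso_def bij_betw_def by blast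
  have "\<not> solvable K" using group_hom.inj_hom_imp_solvable[OF gh inj] assms(5) by blast
  moreover have oK: "order K = n0" using iso_same_order[OF K(2)] assms(4) by simp
  moreover have "subgroup (\<phi> ` H) K" using group_hom.subgroup_img_is_subgroup[OF gh assms(6)] .
  moreover have "card (\<phi> ` H) = card H"
    using card_image inj_on_subset[OF inj subgroup.subset[OF assms(6)]] by blast
  ultimately have "\<not> solvable (K\<lparr>carrier := \<phi> ` H\<rparr>)" using h1 K(1) assms(7) assms(4) by metis
  then show False using solvable_img[OF gh assms(6) sol] by blast
qed

lemma carrier_Mod: "carrier (G Mod M) = rcosets\<^bsub>G\<^esub> M"
  by (simp add: FactGroup_def)

lemma rcos_in_iff:
  assumes "group G" "subgroup M G" "a \<in> carrier G"
  shows "(M #>\<^bsub>G\<^esub> a = M) \<longleftrightarrow> a \<in> M"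
  using group.coset_join1[OF assms(1)] group.coset_join2[OF assms(1)] assms by blast

lemma image_card:
  assumes G: "group G" and N: "M \<lhd> G" and H: "subgroup H G" and fin: "finite (carrier G)"
  shows "subgroup ((\<lambda>a. M #>\<^bsub>G\<^esub> a) ` H) (G Mod M)"
    and "card ((\<lambda>a. M #>\<^bsub>G\<^esub> a) ` H) * card (H \<inter> M) = card H"
proof -
  let ?\<pi> = "\<lambda>a. M #>\<^bsub>G\<^esub> a"
  have hom: "?\<pi> \<in> hom G (G Mod M)" using normal.r_coset_hom_Mod[OF N] .
  have gQ: "group (G Mod M)" using normal.factorgroup_is_group[OF N] .
  have gh: "group_hom G (G Mod M) ?\<pi>"
    using G gQ hom unfolding group_hom_def group_hom_axioms_def by blast
  show sI: "subgroup (?\<pi> ` H) (G Mod M)" using group_hom.subgroup_img_is_subgroup[OF gh H] .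
  let ?GH = "G\<lparr>carrier := H\<rparr>"
  let ?Q' = "(G Mod M)\<lparr>carrier := ?\<pi> ` H\<rparr>"
  have gGH: "group ?GH" using group.subgroup_imp_group[OF G H] .
  have gQ': "group ?Q'" using group.subgroup_imp_group[OF gQ sI] .
  have Hsub: "H \<subseteq> carrier G" using subgroup.subset[OF H] .
  have hom': "?\<pi> \<in> hom ?GH ?Q'"
  proof (rule homI)
    fix x assume "x \<in> carrier ?GH"
    then show "?\<pi> x \<in> carrier ?Q'" by simp
  next
    fix x y assume "x \<in> carrier ?GH" "y \<in> carrier ?GH"
    then show "?\<pi> (x \<otimes>\<^bsub>?GH\<^esub> y) = ?\<pi> x \<otimes>\<^bsub>?Q'\<^esub> ?\<pi> y"
      using hom_mult[OF hom] Hsub by auto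
  qed
  have gh': "group_hom ?GH ?Q' ?\<pi>"
    using gGH gQ' hom' unfolding group_hom_def group_hom_axioms_def by blast
  have sM: "subgroup M G" using normal_imp_subgroup[OF N] .
  have ker: "kernel ?GH ?Q' ?\<pi> = H \<inter> M"
    unfolding kernel_def using rcos_in_iff[OF G sM] Hsub by (auto simp: FactGroup_def)
  have "(\<lambda>Z. the_elem (?\<pi> ` Z)) \<in> iso (?GH Mod (kernel ?GH ?Q' ?\<pi>)) ?Q'"
    using group_hom.FactGroup_iso_set[OF gh'] by simp
  then have "order (?GH Mod (H \<inter> M)) = card (?\<pi> ` H)"
    using iso_same_order ker by (metis partial_object.select_convs(1) partial_object.surjective partial_object.update_convs(1) order_def)
  moreover have "card (rcosets\<^bsub>?GH\<^esub> (H \<inter> M)) * card (H \<inter> M) = order ?GH"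
    using group.lagrange[OF gGH] group_hom.subgroup_kernel[OF gh'] ker by metis
  ultimately show "card (?\<pi> ` H) * card (H \<inter> M) = card H"
    unfolding order_def by (simp add: FactGroup_def)
qed

lemma (in group) max_normal:
  assumes fin: "finite (carrier G)" and o1: "order G > 1"
  shows "\<exists>M. M \<lhd> G \<and> M \<noteq> carrier G \<and> simple_group (G Mod M)"
proof -
  note G = is_group
  define S where "S = {M. M \<lhd> G \<and> M \<noteq> carrier G}"
  have finS: "finite S"
  proof (rule finite_subset[of S "Pow (carrier G)"])
    show "S \<subseteq> Pow (carrier G)" unfolding S_def using normal_imp_subgroup subgroup.subset by blast
  qed (use fin in simp)
  have c1: "carrier G \<noteq> {\<one>}"
  proof
    assume "carrier G = {\<one>}"
    then have "order G = 1" unfolding order_def by simp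
    with o1 show False by simp
  qed
  have "{\<one>} \<in> S" unfolding S_def using one_is_normal c1 by auto
  then have neS: "S \<noteq> {}" by blast
  define m where "m = Max (card ` S)"
  have "m \<in> card ` S" unfolding m_def using finS neS by (intro Max_in) auto
  then obtain M where M: "M \<in> S" "card M = m" by auto
  have maxM: "card M' \<le> card M" if "M' \<in> S" for M'
    using Max_ge[of "card ` S" "card M'"] finS that M(2) unfolding m_def by auto
  have N: "M \<lhd> G" and MG: "M \<noteq> carrier G" using M(1) unfolding S_def by auto
  have sM: "subgroup M G" using normal_imp_subgroup[OF N] .
  have gQ: "group (G Mod M)" using normal.factorgroup_is_group[OF N] .
  have "simple_group (G Mod M)"
  proof (rule simple_group.intro[OF gQ], rule simple_group_axioms.intro)
    have "M \<subset> carrier G" using MG subgroup.subset[OF sM] by blast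
    then have "card M < card (carrier G)" using fin psubset_card_mono by blast
    moreover have "card (rcosets M) * card M = card (carrier G)" using lagrange[OF sM] unfolding order_def .
    ultimately have "card (rcosets M) \<noteq> 0" "card (rcosets M) \<noteq> 1" by (metis less_irrefl mult_zero_left not_less_zero, metis less_irrefl mult_1)
    then show "1 < order (G Mod M)" unfolding order_def carrier_Mod by linarith
  next
    fix Y assume Y: "Y \<lhd> G Mod M"
    let ?Q = "G Mod M"
    let ?\<pi> = "\<lambda>a. M #> a"
    let ?\<psi> = "\<lambda>a. Y #>\<^bsub>?Q\<^esub> (M #> a)"
    have h1: "?\<pi> \<in> hom G ?Q" using normal.r_coset_hom_Mod[OF N] .
    have h2: "(\<lambda>C. Y #>\<^bsub>?Q\<^esub> C) \<in> hom ?Q (?Q Mod Y)" using normal.r_coset_hom_Mod[OF Y] .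
    have hpsi: "?\<psi> \<in> hom G (?Q Mod Y)" using Group.hom_compose[OF h1 h2] by (simp add: o_def)
    have gQY: "group (?Q Mod Y)" using normal.factorgroup_is_group[OF Y] .
    have ghpsi: "group_hom G (?Q Mod Y) ?\<psi>"
      using G gQY hpsi unfolding group_hom_def group_hom_axioms_def by blast
    define U where "U = {a \<in> carrier G. M #> a \<in> Y}"
    have sY: "subgroup Y ?Q" using normal_imp_subgroup[OF Y] .
    have piQ: "M #> a \<in> carrier ?Q" if "a \<in> carrier G" for a
      using that unfolding carrier_Mod RCOSETS_def by blast
    have "kernel G (?Q Mod Y) ?\<psi> = U"
      unfolding kernel_def U_def using rcos_in_iff[OF gQ sY] piQ by (auto simp: FactGroup_def)
    then have UN: "U \<lhd> G" using group_hom.normal_kernel[OF ghpsi] by simp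
    have MU: "M \<subseteq> U"
    proof
      fix a assume a: "a \<in> M"
      have "a \<in> carrier G" using a subgroup.subset[OF sM] by blast
      moreover have "M #> a = M" using rcos_in_iff[OF G sM] a calculation by blast
      moreover have "M \<in> Y" using subgroup.one_closed[OF sY] by (simp add: FactGroup_def)
      ultimately show "a \<in> U" unfolding U_def by simp
    qed
    have YQ: "Y \<subseteq> carrier ?Q" using subgroup.subset[OF sY] .
    show "Y = carrier ?Q \<or> Y = {\<one>\<^bsub>?Q\<^esub>}"
    proof (cases "U = carrier G")
      case True
      have "carrier ?Q \<subseteq> Y"
      proof
        fix C assume "C \<in> carrier ?Q"
        then obtain a where a: "a \<in> carrier G" "C = M #> a" unfolding carrier_Mod RCOSETS_def by blast
        then show "C \<in> Y" using True unfolding U_def by blast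
      qed
      then show ?thesis using YQ by blast
    next
      case False
      then have "U \<in> S" using UN unfolding S_def by blast
      then have "card U \<le> card M" using maxM by blast
      moreover have "finite U" unfolding U_def using fin by simp
      ultimately have UM: "U = M" using card_seteq[OF _ MU] by simp
      have "Y \<subseteq> {M}"
      proof
        fix C assume C: "C \<in> Y"
        then have "C \<in> carrier ?Q" using YQ by blast
        then obtain a where a: "a \<in> carrier G" "C = M #> a" unfolding carrier_Mod RCOSETS_def by blast
        then have "a \<in> M" using C UM unfolding U_def by blast
        then show "C \<in> {M}" using a rcos_in_iff[OF G sM] by simp
      qed
      moreover have "M \<in> Y" using subgroup.one_closed[OF sY] by (simp add: FactGroup_def)
      ultimately show ?thesis by (auto simp: FactGroup_def)
    qed
  qed
  then show ?thesis using N MG by blast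
qed

lemma comp_append:
  assumes G: "group G" and N: "M \<lhd> G" and S: "simple_group (G Mod M)"
    and C: "composition_series (G\<lparr>carrier := M\<rparr>) Hs"
  shows "composition_series G (Hs @ [carrier G])"
    and "\<And>i. Suc i < length Hs \<Longrightarrow> comp_factor G (Hs @ [carrier G]) i = comp_factor (G\<lparr>carrier := M\<rparr>) Hs i"
    and "Suc (length Hs - 1) < length (Hs @ [carrier G])"
    and "comp_factor G (Hs @ [carrier G]) (length Hs - 1) = G Mod M"
proof -
  have ne: "Hs \<noteq> []" and hd: "hd Hs = {\<one>\<^bsub>G\<^esub>}" and lst: "last Hs = M"
    and sg: "\<And>H. H \<in> set Hs \<Longrightarrow> subgroup H (G\<lparr>carrier := M\<rparr>)"
    and st: "\<And>i. Suc i < length Hs \<Longrightarrow> Hs ! i \<lhd> G\<lparr>carrier := Hs ! Suc i\<rparr> \<and>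
        simple_group (G\<lparr>carrier := Hs ! Suc i\<rparr> Mod (Hs ! i))"
    using C unfolding composition_series_def by auto
  have sM: "subgroup M G" using normal_imp_subgroup[OF N] .
  have lastM: "Hs ! (length Hs - 1) = M" using lst ne by (simp add: last_conv_nth)
  show "Suc (length Hs - 1) < length (Hs @ [carrier G])" using ne by simp
  show "comp_factor G (Hs @ [carrier G]) (length Hs - 1) = G Mod M"
    unfolding comp_factor_def using ne lastM by (simp add: nth_append)
  show "\<And>i. Suc i < length Hs \<Longrightarrow> comp_factor G (Hs @ [carrier G]) i = comp_factor (G\<lparr>carrier := M\<rparr>) Hs i"
    unfolding comp_factor_def by (simp add: nth_append)
  have f1: "\<forall>H\<in>set (Hs @ [carrier G]). subgroup H G"
    using sg group.incl_subgroup[OF G sM] group.subgroup_self[OF G] by auto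
  have f2: "(Hs @ [carrier G]) ! i \<lhd> G\<lparr>carrier := (Hs @ [carrier G]) ! Suc i\<rparr> \<and>
        simple_group (G\<lparr>carrier := (Hs @ [carrier G]) ! Suc i\<rparr> Mod ((Hs @ [carrier G]) ! i))"
    if i: "Suc i < length (Hs @ [carrier G])" for i
  proof (cases "Suc i < length Hs")
    case True
    then show ?thesis using st[OF True] by (simp add: nth_append)
  next
    case False
    then have "i = length Hs - 1" using i by simp
    then show ?thesis using lastM N S ne by (simp add: nth_append)
  qed
  show "composition_series G (Hs @ [carrier G])"
    unfolding composition_series_def using f1 f2 ne hd by simp
qed

lemma comp_exists:
  fixes G :: "('a, 'b) monoid_scheme"
  shows "group G \<Longrightarrow> finite (carrier G) \<Longrightarrow> \<exists>Hs. composition_series G Hs"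
proof (induction "order G" arbitrary: G rule: less_induct)
  case less
  interpret group G by fact
  show ?case
  proof (cases "order G > 1")
    case False
    have "\<one>\<^bsub>G\<^esub> \<in> carrier G" by simp
    then have "order G \<noteq> 0" using less.prems(2) unfolding order_def by auto
    then have "order G = 1" using False by simp
    then have c1: "carrier G = {\<one>\<^bsub>G\<^esub>}" unfolding order_def using one_closed
      by (metis card_1_singletonE singletonD)
    have "composition_series G [{\<one>\<^bsub>G\<^esub>}]"
      unfolding composition_series_def using c1 triv_subgroup by simp
    then show ?thesis by blast
  next
    case True
    obtain M where M: "M \<lhd> G" "M \<noteq> carrier G" "simple_group (G Mod M)"
      using max_normal[OF less.prems(2) True] by blast
    have sM: "subgroup M G" using normal_imp_subgroup[OF M(1)] .
    have "M \<subset> carrier G" using M(2) subgroup.subset[OF sM] by blast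
    then have "card M < order G" unfolding order_def using less.prems(2) psubset_card_mono by blast
    moreover have "group (G\<lparr>carrier := M\<rparr>)" using subgroup_imp_group[OF sM] .
    moreover have "finite M" using less.prems(2) subgroup.subset[OF sM] finite_subset by blast
    ultimately obtain Hs where "composition_series (G\<lparr>carrier := M\<rparr>) Hs"
      using less.hyps[of "G\<lparr>carrier := M\<rparr>"] unfolding order_def by auto
    then show ?thesis using comp_append(1)[OF is_group M(1) M(3)] by blast
  qed
qed

lemma nl1:
  fixes k b c m :: nat
  assumes "2 ^ k * c = 2 ^ b * m" "c \<le> m" "0 < m"
  shows "m = 2 ^ (k - b) * c"
proof (cases "b \<le> k")
  case True
  then have "(2::nat) ^ k = 2 ^ b * 2 ^ (k - b)" by (simp add: power_add[symmetric])
  then show ?thesis using assms(1) by simp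
next
  case False
  then have "(2::nat) ^ b = 2 ^ k * 2 ^ (b - k)" by (simp add: power_add[symmetric])
  then have "c = 2 ^ (b - k) * m" using assms(1) by simp
  moreover have "(2::nat) ^ (b - k) \<ge> 2" using False
    by (metis Suc_leI le_add_diff_inverse2 less_imp_le_nat not_less power_increasing power_one_right zero_less_diff one_le_numeral less_one)
  ultimately have "c \<ge> 2 * m" by simp
  then show ?thesis using assms by simp
qed

lemma nl2:
  fixes k c t r :: nat
  assumes "2 ^ k * c = t * 2 ^ r" "c dvd 2 ^ r"
  shows "\<exists>j. t = 2 ^ j"
proof -
  obtain b where b: "c = 2 ^ b" using pow2_dvd[OF assms(2)] by blast
  have "t dvd 2 ^ (k + b)" using assms(1) b by (metis dvd_triv_left power_add)
  then show ?thesis using pow2_dvd by blast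
qed

context
  fixes n0 :: nat
  assumes n0_pos: "n0 > 0"
    and h1: "\<forall>K :: nat monoid. group K \<and> order K = n0 \<and> \<not> solvable K \<longrightarrow>
               (\<forall>H k. subgroup H K \<and> order K = 2 ^ k * card H \<longrightarrow>
                  \<not> solvable (K\<lparr>carrier := H\<rparr>))"
    and h2: "\<forall>r'::nat. r' \<ge> 1 \<longrightarrow> \<not> (\<exists>S :: nat monoid. simple_group S \<and> \<not> comm_group S \<and>
               order S = 2 ^ r' * n0)"
    and h3: "even n0 \<longrightarrow> solvable_number (n0 div 2)"
    and h4: "\<forall>p r'. Factorial_Ring.prime (p::nat) \<and> odd p \<and> p dvd n0 \<longrightarrow> solvable_number ((2 ^ r' * n0) div p)"
begin

lemma main_ind:
  fixes G :: "('a, 'b) monoid_scheme"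
  shows "group G \<Longrightarrow> order G = 2 ^ r * n0 \<Longrightarrow> \<not> solvable G \<Longrightarrow>
    (\<forall>H k. subgroup H G \<and> order G = 2 ^ k * card H \<longrightarrow> \<not> solvable (G\<lparr>carrier := H\<rparr>))
       \<and> (\<exists>Hs i. composition_series G Hs \<and> Suc i < length Hs \<and>
              \<not> comm_group (comp_factor G Hs i) \<and> order (comp_factor G Hs i) = n0)"
proof (induction r arbitrary: G rule: less_induct)
  case (less r G)
  note gG = less.prems(1) and ordG = less.prems(2) and insG = less.prems(3)
  interpret group G by fact
  have fin: "finite (carrier G)" using ordG n0_pos unfolding order_def
    by (metis card.infinite nat_0_less_mult_iff not_less_zero zero_less_numeral zero_less_power)
  have o1: "order G > 1"
  proof (rule ccontr)
    assume "\<not> order G > 1"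
    moreover have "order G \<noteq> 0" using fin one_closed unfolding order_def by auto
    ultimately have "order G = 1" by simp
    then have c1: "carrier G = {\<one>\<^bsub>G\<^esub>}" unfolding order_def using one_closed
      by (metis card_1_singletonE singletonD)
    have "solvable G" unfolding solvable_def using c1 solvable_seq.unity[of G] by simp
    then show False using insG by blast
  qed
  obtain M where N: "M \<lhd> G" and MG: "M \<noteq> carrier G" and simp: "simple_group (G Mod M)"
    using max_normal[OF fin o1] by blast
  let ?Q = "G Mod M"
  let ?\<pi> = "\<lambda>a. M #>\<^bsub>G\<^esub> a"
  let ?GM = "G\<lparr>carrier := M\<rparr>"
  have sM: "subgroup M G" using normal_imp_subgroup[OF N] .
  have gQ: "group ?Q" using normal.factorgroup_is_group[OF N] .
  have gGM: "group ?GM" using subgroup_imp_group[OF sM] .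
  have finM: "finite M" using fin subgroup.subset[OF sM] finite_subset by blast
  have ghpi: "group_hom G ?Q ?\<pi>"
    using gG gQ normal.r_coset_hom_Mod[OF N] unfolding group_hom_def group_hom_axioms_def by blast
  have oGM: "order ?GM = card M" unfolding order_def by simp
  have lag: "order ?Q * card M = 2 ^ r * n0"
    using lagrange[OF sM] ordG unfolding order_def carrier_Mod by simp
  have oQ1: "order ?Q > 1" using simple_group.order_gt_one[OF simp] .
  have mpos: "card M > 0" using finM subgroup.one_closed[OF sM] card_gt_0_iff by blast
  have subK: "subgroup (H \<inter> M) ?GM" "subgroup (H \<inter> M) G" "card (H \<inter> M) \<le> card M"
    "card (H \<inter> M) dvd card M" if "subgroup H G" for H
  proof -
    show s1: "subgroup (H \<inter> M) G" using subgroups_Inter_pair[OF that sM] .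
    show s2: "subgroup (H \<inter> M) ?GM" using subgroup_incl[OF s1 sM] by blast
    show "card (H \<inter> M) \<le> card M" using finM by (simp add: card_mono)
    show "card (H \<inter> M) dvd card M" using group.lagrange[OF gGM s2] oGM by (metis dvd_triv_right)
  qed
  have imgQ: "subgroup (?\<pi> ` H) ?Q" "card (?\<pi> ` H) * card (H \<inter> M) = card H"
    "card (?\<pi> ` H) dvd order ?Q" if "subgroup H G" for H
  proof -
    show s: "subgroup (?\<pi> ` H) ?Q" using image_card(1)[OF gG N that fin] .
    show "card (?\<pi> ` H) * card (H \<inter> M) = card H" using image_card(2)[OF gG N that fin] .
    show "card (?\<pi> ` H) dvd order ?Q" using group.lagrange[OF gQ s] by (metis dvd_triv_right)
  qed
  show ?case
  proof (cases "comm_group ?Q")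
    case True
    have insM: "\<not> solvable ?GM" using solvable_ext[OF gG N _ True] insG by blast
    have "order ?GM dvd 2 ^ r * n0" using lag oGM by (metis dvd_triv_right)
    then obtain s where s: "card M = 2 ^ s * n0"
      using insolv_order[OF n0_pos h3 h4 gGM _ insM] oGM by metis
    have "order ?Q * 2 ^ s = 2 ^ r" using lag s n0_pos by simp
    then have qd: "order ?Q dvd 2 ^ r" by (metis dvd_triv_left)
    then obtain a where a: "order ?Q = 2 ^ a" using pow2_dvd by blast
    have "a \<noteq> 0" using a oQ1 by (metis less_irrefl power_0 One_nat_def)
    moreover have "(2::nat) ^ (a + s) = 2 ^ r" using \<open>order ?Q * 2 ^ s = 2 ^ r\<close> a by (simp add: power_add)
    then have "a + s = r" using power_inject_exp[of 2] by simp
    ultimately have sr: "s < r" by simp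
    have IH: "(\<forall>H k. subgroup H ?GM \<and> order ?GM = 2 ^ k * card H \<longrightarrow> \<not> solvable (?GM\<lparr>carrier := H\<rparr>))
       \<and> (\<exists>Hs i. composition_series ?GM Hs \<and> Suc i < length Hs \<and>
              \<not> comm_group (comp_factor ?GM Hs i) \<and> order (comp_factor ?GM Hs i) = n0)"
      using less.IH[OF sr gGM _ insM] s oGM by simp
    show ?thesis
    proof (intro conjI allI impI)
      fix H k assume Hk: "subgroup H G \<and> order G = 2 ^ k * card H"
      show "\<not> solvable (G\<lparr>carrier := H\<rparr>)"
      proof
        assume sol: "solvable (G\<lparr>carrier := H\<rparr>)"
        have sH: "subgroup H G" using Hk by blast
        note K = subK[OF sH]
        have solK: "solvable (G\<lparr>carrier := H \<inter> M\<rparr>)"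
          using solvable_sub_mono[OF gG sH K(2) _ sol] by blast
        note I = imgQ[OF sH]
        obtain t where t: "order ?Q = card (?\<pi> ` H) * t" using I(3) by blast
        have "t dvd 2 ^ a" using t a by (metis dvd_triv_right)
        then obtain b where b: "t = 2 ^ b" using pow2_dvd by blast
        have epos: "card (?\<pi> ` H) > 0"
          using I(2) Hk ordG n0_pos by (metis mult_is_0 neq0_conv order_def power_not_zero zero_neq_numeral)
        have "card (?\<pi> ` H) * (2 ^ k * card (H \<inter> M)) = card (?\<pi> ` H) * (2 ^ b * card M)"
          using I(2) Hk ordG lag t b by (metis mult.assoc mult.left_commute)
        then have "2 ^ k * card (H \<inter> M) = 2 ^ b * card M" using epos by simp
        then have "card M = 2 ^ (k - b) * card (H \<inter> M)" using nl1 K(3) mpos by blast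
        then have "subgroup (H \<inter> M) ?GM \<and> order ?GM = 2 ^ (k - b) * card (H \<inter> M)" using K(1) oGM by simp
        then have "\<not> solvable (?GM\<lparr>carrier := H \<inter> M\<rparr>)" using conjunct1[OF IH] by blast
        then show False using solK by simp
      qed
    next
      obtain Hs i where Hs: "composition_series ?GM Hs" "Suc i < length Hs"
        "\<not> comm_group (comp_factor ?GM Hs i)" "order (comp_factor ?GM Hs i) = n0"
        using IH by blast
      note A = comp_append[OF gG N simp Hs(1)]
      show "\<exists>Hs i. composition_series G Hs \<and> Suc i < length Hs \<and>
              \<not> comm_group (comp_factor G Hs i) \<and> order (comp_factor G Hs i) = n0"
        using A(1) A(2)[OF Hs(2)] Hs(2-4) by (intro exI[of _ "Hs @ [carrier G]"] exI[of _ i]) simp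
    qed
  next
    case False
    have insQ: "\<not> solvable ?Q" using simple_group.simple_noncomm_insolvable[OF simp False] .
    have "order ?Q dvd 2 ^ r * n0" using lag by (metis dvd_triv_left)
    then obtain s where s: "order ?Q = 2 ^ s * n0"
      using insolv_order[OF n0_pos h3 h4 gQ _ insQ] by metis
    have "s = 0"
    proof (rule ccontr)
      assume "s \<noteq> 0"
      then show False using h2_any[OF h2 simp False s] by simp
    qed
    then have oQ: "order ?Q = n0" using s by simp
    have cM: "card M = 2 ^ r" using lag oQ n0_pos by simp
    show ?thesis
    proof (intro conjI allI impI)
      fix H k assume Hk: "subgroup H G \<and> order G = 2 ^ k * card H"
      show "\<not> solvable (G\<lparr>carrier := H\<rparr>)"
      proof
        assume sol: "solvable (G\<lparr>carrier := H\<rparr>)"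
        have sH: "subgroup H G" using Hk by blast
        note K = subK[OF sH]
        note I = imgQ[OF sH]
        have solI: "solvable (?Q\<lparr>carrier := ?\<pi> ` H\<rparr>)" using solvable_img[OF ghpi sH sol] .
        obtain t where t: "order ?Q = card (?\<pi> ` H) * t" using I(3) by blast
        have epos: "card (?\<pi> ` H) > 0"
          using I(2) Hk ordG n0_pos by (metis mult_is_0 neq0_conv order_def power_not_zero zero_neq_numeral)
        have "card (?\<pi> ` H) * (2 ^ k * card (H \<inter> M)) = card (?\<pi> ` H) * (t * 2 ^ r)"
          using I(2) Hk ordG lag t cM by (metis mult.assoc mult.left_commute)
        then have "2 ^ k * card (H \<inter> M) = t * 2 ^ r" using epos by simp
        then obtain j where "t = 2 ^ j" using nl2 K(4) cM by metis
        then have "order ?Q = 2 ^ j * card (?\<pi> ` H)" using t by simp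
        then have "\<not> solvable (?Q\<lparr>carrier := ?\<pi> ` H\<rparr>)"
          using h1_any[OF h1 n0_pos gQ oQ insQ I(1)] by blast
        then show False using solI by blast
      qed
    next
      obtain Hs where Hs: "composition_series ?GM Hs" using comp_exists[OF gGM] finM by auto
      note A = comp_append[OF gG N simp Hs]
      show "\<exists>Hs i. composition_series G Hs \<and> Suc i < length Hs \<and>
              \<not> comm_group (comp_factor G Hs i) \<and> order (comp_factor G Hs i) = n0"
        using A(1) A(3) A(4) False oQ
        by (intro exI[of _ "Hs @ [carrier G]"] exI[of _ "length Hs - 1"]) simp
    qed
  qed
qed

end

theorem lemma5p2:
  fixes n0 :: nat and G :: "('a, 'b) monoid_scheme" and r :: nat
  assumes n0_pos: "n0 > 0"
    and h1: "\<forall>K :: nat monoid. group K \<and> order K = n0 \<and> \<not> solvable K \<longrightarrow>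
               (\<forall>H k. subgroup H K \<and> order K = 2 ^ k * card H \<longrightarrow>
                  \<not> solvable (K\<lparr>carrier := H\<rparr>))"
    and h2: "\<forall>r'::nat. r' \<ge> 1 \<longrightarrow> \<not> (\<exists>S :: nat monoid. simple_group S \<and> \<not> comm_group S \<and>
               order S = 2 ^ r' * n0)"
    and h3: "even n0 \<longrightarrow> solvable_number (n0 div 2)"
    and h4: "\<forall>p r'. Factorial_Ring.prime (p::nat) \<and> odd p \<and> p dvd n0 \<longrightarrow> solvable_number ((2 ^ r' * n0) div p)"
    and G: "group G" and ord: "order G = 2 ^ r * n0" and insolv: "\<not> solvable G"
  shows "(\<forall>H k. subgroup H G \<and> order G = 2 ^ k * card H \<longrightarrow> \<not> solvable (G\<lparr>carrier := H\<rparr>))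
       \<and> (\<exists>Hs i. composition_series G Hs \<and> Suc i < length Hs \<and>
              \<not> comm_group (comp_factor G Hs i) \<and> order (comp_factor G Hs i) = n0)"
  using main_ind[OF n0_pos h1 h2 h3 h4 G ord insolv] .

end
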